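(* Let $n\ge1$ and $d\ge1$. The space $V^n_d$ of divergence-free vector fields in $F^n_d$ has a basis consisting of (i) the $n\dim P^{n-1}_d$ vector monomials $p_{i,m}=\xi^m\hat e_i$ with $1\le i\le n$, $m\in\mathbb{N}^n$, $|m|=d$ and $m_i=0$; and (ii) the $(n-1)\dim P^n_{d-1}$ vector fields $$v_{i,m}=\xi^m\big[(1+m_{i+1})\,\xi_i\hat e_i-(1+m_i)\,\xi_{i+1}\hat e_{i+1}\big],\qquad 1\le i\le n-1,\ m\in\mathbb{N}^n,\ |m|=d-1 .$$
   Context: For $\xi\in\mathbb{R}^n$ and $m\in\mathbb{N}^n$, $\xi^m=\xi_1^{m_1}\cdots\xi_n^{m_n}$ and $|m|=\sum_i m_i$. $P^n_d$ is the space of real homogeneous polynomials of degree $d$ in $n$ variables (so $\dim P^n_d=\binom{n+d-1}{d}$). $F^n_d$ is the space of vector fields $h:\mathbb{R}^n\to\mathbb{R}^n$ each of whose components lies in $P^n_d$, and $V^n_d=\{v\in F^n_d:\nabla\cdot v=0\}$. $\hat e_i$ is the $i$-th standard basis vector. *)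

theory Defs
  imports Complex_Main
begin

text \<open>Coordinates are indexed 0..n-1 (0-based). A multi-index is a
function m :: nat => nat vanishing outside {0..<n}. A homogeneous polynomial
vector field of degree d is given by its coefficients: F i m is the coefficient
of the monomial xi^m in the i-th component.\<close>

type_synonym mindex = "nat \<Rightarrow> nat"
type_synonym vfield = "nat \<Rightarrow> mindex \<Rightarrow> real"

definition mi :: "nat \<Rightarrow> nat \<Rightarrow> mindex set" where
  "mi n d = {m. (\<forall>j. n \<le> j \<longrightarrow> m j = 0) \<and> (\<Sum>j<n. m j) = d}"

definition dimP :: "nat \<Rightarrow> nat \<Rightarrow> nat" where
  "dimP n d = (n + d - 1) choose d"

definition Fd :: "nat \<Rightarrow> nat \<Rightarrow> vfield set" where
  "Fd n d = {F. \<forall>i m. F i m \<noteq> 0 \<longrightarrow> i < n \<and> m \<in> mi n d}"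

text \<open>Coefficient of xi^k in the divergence of F (formal differentiation:
 d/dxi_i xi^m = m_i xi^(m - e_i)).\<close>
definition divg :: "nat \<Rightarrow> vfield \<Rightarrow> mindex \<Rightarrow> real" where
  "divg n F k = (\<Sum>i<n. real (k i + 1) * F i (k(i := k i + 1)))"

definition Vd :: "nat \<Rightarrow> nat \<Rightarrow> vfield set" where
  "Vd n d = {F \<in> Fd n d. \<forall>k. divg n F k = 0}"

definition pvec :: "nat \<Rightarrow> mindex \<Rightarrow> vfield" where
  "pvec i m = (\<lambda>j k. if j = i \<and> k = m then 1 else 0)"

definition vvec :: "nat \<Rightarrow> mindex \<Rightarrow> vfield" where
  "vvec i m = (\<lambda>j k.
      (if j = i \<and> k = m(i := m i + 1) then real (1 + m (i+1)) else 0)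
    - (if j = i + 1 \<and> k = m(i+1 := m (i+1) + 1) then real (1 + m i) else 0))"

definition I1 :: "nat \<Rightarrow> nat \<Rightarrow> (nat \<times> mindex) set" where
  "I1 n d = {(i, m). i < n \<and> m \<in> mi n d \<and> m i = 0}"

definition I2 :: "nat \<Rightarrow> nat \<Rightarrow> (nat \<times> mindex) set" where
  "I2 n d = {(i, m). i + 1 < n \<and> m \<in> mi n (d - 1)}"

definition represents :: "nat \<Rightarrow> nat \<Rightarrow> vfield \<Rightarrow>
    ((nat \<times> mindex) \<Rightarrow> real) \<Rightarrow> ((nat \<times> mindex) \<Rightarrow> real) \<Rightarrow> bool" where
  "represents n d F c1 c2 \<longleftrightarrow>
     (\<forall>x. x \<notin> I1 n d \<longrightarrow> c1 x = 0) \<and> (\<forall>x. x \<notin> I2 n d \<longrightarrow> c2 x = 0) \<and>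
     (\<forall>j k. F j k = (\<Sum>x\<in>I1 n d. c1 x * pvec (fst x) (snd x) j k)
                   + (\<Sum>x\<in>I2 n d. c2 x * vvec (fst x) (snd x) j k))"

end

theory Submission
  imports Defs
begin

lemma lists_fin: "finite {l::nat list. length l = n \<and> sum_list l = d}"
proof -
  have "{l::nat list. length l = n \<and> sum_list l = d} \<subseteq> {l. set l \<subseteq> {..d} \<and> length l = n}"
    using member_le_sum_list by fastforce
  moreover have "finite {l::nat list. set l \<subseteq> {..d} \<and> length l = n}"
    by (rule finite_lists_length_eq) simp
  ultimately show ?thesis by (rule finite_subset)
qed

lemma mi_bij: "bij_betw (\<lambda>m. map m [0..<n]) (mi n d) {l. length l = n \<and> sum_list l = d}"
proof (rule bij_betw_byWitness[where f'="\<lambda>l j. if j < n then l ! j else 0"])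
  show "\<forall>a\<in>mi n d. (\<lambda>j. if j < n then map a [0..<n] ! j else 0) = a"
    by (auto simp: mi_def fun_eq_iff)
  show "\<forall>a'\<in>{l. length l = n \<and> sum_list l = d}. map (\<lambda>j. if j < n then a' ! j else 0) [0..<n] = a'"
    by (auto intro: nth_equalityI)
  show "(\<lambda>m. map m [0..<n]) ` mi n d \<subseteq> {l. length l = n \<and> sum_list l = d}"
    by (auto simp: mi_def sum_list_sum_nth atLeast0LessThan)
  show "(\<lambda>l j. if j < n then l ! j else 0) ` {l. length l = n \<and> sum_list l = d} \<subseteq> mi n d"
    by (auto simp: mi_def sum_list_sum_nth atLeast0LessThan)
qed

lemma mi_fin: "finite (mi n d)"
  using bij_betw_finite[OF mi_bij] lists_fin by blast

lemma mi_card: "card (mi n d) = (d + n - 1) choose d"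
  using bij_betw_same_card[OF mi_bij] card_length_sum_list by simp

definition sw :: "nat \<Rightarrow> nat \<Rightarrow> nat \<Rightarrow> nat" where
  "sw i k j = (if j = i then k else if j = k then i else j)"

lemma sw_invol: "sw i k (sw i k j) = j"
  by (simp add: sw_def)

lemma sum_sw: assumes "i < n" "k < n" shows "(\<Sum>j<n. f (sw i k j)) = (\<Sum>j<n. (f j :: nat))"
  by (rule sum.reindex_bij_witness[where i="sw i k" and j="sw i k"])
     (use assms in \<open>auto simp: sw_def\<close>)

lemma mi0_card:
  assumes "i < n"
  shows "card {m \<in> mi n d. m i = 0} = card (mi (n - 1) d)"
proof -
  let ?s = "sw i (n - 1)"
  have "bij_betw (\<lambda>m. m \<circ> ?s) {m \<in> mi n d. m i = 0} (mi (n - 1) d)"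
  proof (rule bij_betw_byWitness[where f'="\<lambda>m. m \<circ> ?s"])
    show "\<forall>a\<in>{m \<in> mi n d. m i = 0}. a \<circ> ?s \<circ> ?s = a"
      by (auto simp: fun_eq_iff sw_invol)
    show "\<forall>a'\<in>mi (n - 1) d. a' \<circ> ?s \<circ> ?s = a'"
      by (auto simp: fun_eq_iff sw_invol)
    show "(\<lambda>m. m \<circ> ?s) ` {m \<in> mi n d. m i = 0} \<subseteq> mi (n - 1) d"
    proof safe
      fix m assume m: "m \<in> mi n d" "m i = 0"
      have z: "\<forall>j. n - 1 \<le> j \<longrightarrow> m (?s j) = 0"
        using m assms by (auto simp: mi_def sw_def)
      have "(\<Sum>j<n. m (?s j)) = d" using m assms by (simp add: sum_sw mi_def)
      moreover have "{..<n} = insert (n - 1) {..<n - 1}" using assms by auto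
      ultimately have "(\<Sum>j<n - 1. m (?s j)) = d" using z by simp
      then show "m \<circ> ?s \<in> mi (n - 1) d" using z by (simp add: mi_def)
    qed
    show "(\<lambda>m. m \<circ> ?s) ` mi (n - 1) d \<subseteq> {m \<in> mi n d. m i = 0}"
    proof safe
      fix m assume m: "m \<in> mi (n - 1) d"
      have z: "\<forall>j. n \<le> j \<longrightarrow> m (?s j) = 0"
        using m assms by (auto simp: mi_def sw_def)
      have e: "{..<n} = insert (n - 1) {..<n - 1}" using assms by auto
      have "(\<Sum>j<n. m (?s j)) = (\<Sum>j<n. m j)" using assms by (simp add: sum_sw)
      also have "\<dots> = m (n - 1) + (\<Sum>j<n - 1. m j)" unfolding e by simp
      finally have "(\<Sum>j<n. m (?s j)) = d" using m by (simp add: mi_def)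
      then show "m \<circ> ?s \<in> mi n d" using z by (simp add: mi_def)
      show "(m \<circ> ?s) i = 0" using m assms by (simp add: mi_def sw_def)
    qed
  qed
  then show ?thesis by (rule bij_betw_same_card)
qed

lemma I1_eq: "I1 n d = Sigma {..<n} (\<lambda>i. {m \<in> mi n d. m i = 0})"
  by (auto simp: I1_def)

lemma I2_eq: "I2 n d = {..<n - 1} \<times> mi n (d - 1)"
  by (auto simp: I2_def)

lemma I1_fin: "finite (I1 n d)"
  unfolding I1_eq by (rule finite_SigmaI) (auto intro: finite_subset[OF _ mi_fin])

lemma I2_fin: "finite (I2 n d)"
  unfolding I2_eq using mi_fin by simp

lemma I1_card: assumes "n \<ge> 1" shows "card (I1 n d) = n * dimP (n - 1) d"
proof -
  have "card (I1 n d) = (\<Sum>i<n. card {m \<in> mi n d. m i = 0})"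
    unfolding I1_eq by (rule card_SigmaI) (auto intro: finite_subset[OF _ mi_fin])
  also have "\<dots> = (\<Sum>i<n. card (mi (n - 1) d))" by (rule sum.cong) (auto simp: mi0_card)
  also have "\<dots> = n * card (mi (n - 1) d)" by simp
  also have "\<dots> = n * dimP (n - 1) d"
    by (simp only: mi_card dimP_def) (simp add: add.commute)
  finally show ?thesis .
qed

lemma I2_card: assumes "n \<ge> 1" shows "card (I2 n d) = (n - 1) * dimP n (d - 1)"
  unfolding I2_eq using mi_fin by (simp add: card_cartesian_product mi_card dimP_def add.commute)

lemma upd_eq: "((k::nat\<Rightarrow>nat) = m(i := m i + 1)) \<longleftrightarrow> (1 \<le> k i \<and> m = k(i := k i - 1))"
  by (auto simp: fun_eq_iff)

lemma upd_inj: "((k::nat\<Rightarrow>nat)(l := k l + 1) = m(l := m l + 1)) \<longleftrightarrow> k = m"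
  by (auto simp: fun_eq_iff)

lemma sum_upd: "(i::nat) < n \<Longrightarrow> (\<Sum>j<n. (m(i := x)) j) = (\<Sum>j<n. m j) - m i + (x::nat)"
proof -
  assume i: "i < n"
  have "(\<Sum>j<n. (m(i := x)) j) = (m(i := x)) i + (\<Sum>j\<in>{..<n} - {i}. (m(i := x)) j)"
    by (rule sum.remove) (use i in auto)
  also have "(\<Sum>j\<in>{..<n} - {i}. (m(i := x)) j) = (\<Sum>j\<in>{..<n} - {i}. m j)"
    by (rule sum.cong) auto
  moreover have "(\<Sum>j<n. m j) = m i + (\<Sum>j\<in>{..<n} - {i}. m j)"
    by (rule sum.remove) (use i in auto)
  ultimately show ?thesis by simp
qed

lemma mi_inc: "m \<in> mi n e \<Longrightarrow> i < n \<Longrightarrow> m(i := m i + 1) \<in> mi n (Suc e)"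
proof -
  assume a: "m \<in> mi n e" "i < n"
  have "m i \<le> (\<Sum>j<n. m j)" using a by (intro member_le_sum) auto
  moreover have "(\<Sum>j<n. (m(i := m i + 1)) j) = (\<Sum>j<n. m j) - m i + (m i + 1)"
    using a(2) by (rule sum_upd)
  moreover have "\<forall>j\<ge>n. (m(i := m i + 1)) j = 0" using a by (auto simp: mi_def)
  ultimately show ?thesis using a by (simp add: mi_def del: fun_upd_apply)
qed

lemma mi_dec: "k \<in> mi n (Suc e) \<Longrightarrow> i < n \<Longrightarrow> 1 \<le> k i \<Longrightarrow> k(i := k i - 1) \<in> mi n e"
proof -
  assume a: "k \<in> mi n (Suc e)" "i < n" "1 \<le> k i"
  have "k i \<le> (\<Sum>j<n. k j)" using a by (intro member_le_sum) auto
  moreover have "(\<Sum>j<n. (k(i := k i - 1)) j) = (\<Sum>j<n. k j) - k i + (k i - 1)"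
    using a(2) by (rule sum_upd)
  moreover have "\<forall>j\<ge>n. (k(i := k i - 1)) j = 0" using a by (auto simp: mi_def)
  ultimately show ?thesis using a by (simp add: mi_def del: fun_upd_apply)
qed

lemma pvec_V: assumes "(i, m) \<in> I1 n d" shows "pvec i m \<in> Vd n d"
proof -
  have "pvec i m \<in> Fd n d" using assms by (auto simp: Fd_def pvec_def I1_def)
  moreover have "divg n (pvec i m) k = 0" for k
    unfolding divg_def
  proof (rule sum.neutral, intro ballI)
    fix l assume "l \<in> {..<n}"
    show "real (k l + 1) * pvec i m l (k(l := k l + 1)) = 0"
    proof (cases "l = i \<and> k(l := k l + 1) = m")
      case True
      then have "m i = k i + 1" by auto
      then show ?thesis using assms by (simp add: I1_def)
    next
      case False
      then show ?thesis by (auto simp: pvec_def)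
    qed
  qed
  ultimately show ?thesis by (simp add: Vd_def)
qed

lemma vvec_nz: "vvec i m j k \<noteq> 0 \<Longrightarrow>
   (j = i \<and> k = m(i := m i + 1)) \<or> (j = i + 1 \<and> k = m(i + 1 := m (i + 1) + 1))"
proof (rule ccontr)
  assume "vvec i m j k \<noteq> 0" and c: "\<not> ((j = i \<and> k = m(i := m i + 1)) \<or> (j = i + 1 \<and> k = m(i + 1 := m (i + 1) + 1)))"
  have "vvec i m j k = 0" unfolding vvec_def using c by (simp only: if_False de_Morgan_disj)
  then show False using \<open>vvec i m j k \<noteq> 0\<close> by simp
qed

lemma vvec_diag: "vvec i m l (m(l := m l + 1)) =
   (if l = i then real (1 + m (i+1)) else 0) - (if l = i + 1 then real (1 + m i) else 0)"
proof -
  have "(l = i \<and> m(l := m l + 1) = m(i := m i + 1)) = (l = i)" by auto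
  moreover have "(l = i + 1 \<and> m(l := m l + 1) = m(i + 1 := m (i + 1) + 1)) = (l = i + 1)" by auto
  ultimately show ?thesis unfolding vvec_def by (simp only:)
qed

lemma vvec_V: assumes "(i, m) \<in> I2 n d" "d \<ge> 1" shows "vvec i m \<in> Vd n d"
proof -
  have i: "i + 1 < n" and m: "m \<in> mi n (d - 1)" using assms by (auto simp: I2_def)
  have d: "d = Suc (d - 1)" using assms by simp
  have "vvec i m \<in> Fd n d"
    unfolding Fd_def
  proof (intro CollectI allI impI)
    fix j k assume "vvec i m j k \<noteq> 0"
    then have "(j = i \<and> k = m(i := m i + 1)) \<or> (j = i + 1 \<and> k = m(i + 1 := m (i + 1) + 1))"
      by (rule vvec_nz)
    then show "j < n \<and> k \<in> mi n d"
      using i mi_inc[OF m, of i] mi_inc[OF m, of "i+1"] d by auto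
  qed
  moreover have "divg n (vvec i m) k = 0" for k
  proof (cases "k = m")
    case False
    show ?thesis unfolding divg_def
    proof (rule sum.neutral, intro ballI)
      fix l
      have "vvec i m l (k(l := k l + 1)) = 0"
      proof (rule ccontr)
        assume "vvec i m l (k(l := k l + 1)) \<noteq> 0"
        from vvec_nz[OF this] have "k(l := k l + 1) = m(l := m l + 1)" by auto
        then show False using False upd_inj by blast
      qed
      then show "real (k l + 1) * vvec i m l (k(l := k l + 1)) = 0" by simp
    qed
  next
    case True
    have "divg n (vvec i m) k = (\<Sum>l<n. (if l = i then real (m i + 1) * real (1 + m (i+1)) else 0)
        - (if l = i + 1 then real (m (i+1) + 1) * real (1 + m i) else 0))"
      unfolding divg_def True
      by (intro sum.cong refl) (simp only: vvec_diag; simp add: algebra_simps)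
    also have "\<dots> = 0" using i by (simp add: sum_subtractf)
    finally show ?thesis .
  qed
  ultimately show ?thesis by (simp add: Vd_def)
qed

definition TT :: "vfield \<Rightarrow> mindex \<Rightarrow> nat \<Rightarrow> real" where
  "TT F m i = (\<Sum>l<i. real (m l + 1) * F l (m(l := m l + 1)))"

lemma TT_0: "TT F m 0 = 0" by (simp add: TT_def)

lemma TT_Suc: "TT F m (Suc i) = TT F m i + real (m i + 1) * F i (m(i := m i + 1))"
  by (simp add: TT_def)

lemma TT_n: "F \<in> Vd n d \<Longrightarrow> TT F m n = 0"
  by (simp add: TT_def Vd_def divg_def)

definition C1 :: "nat \<Rightarrow> nat \<Rightarrow> vfield \<Rightarrow> (nat \<times> mindex) \<Rightarrow> real" where
  "C1 n d F = (\<lambda>x. if x \<in> I1 n d then F (fst x) (snd x) else 0)"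

definition C2 :: "nat \<Rightarrow> nat \<Rightarrow> vfield \<Rightarrow> (nat \<times> mindex) \<Rightarrow> real" where
  "C2 n d F = (\<lambda>x. if x \<in> I2 n d then TT F (snd x) (fst x + 1)
      / (real (snd x (fst x) + 1) * real (snd x (fst x + 1) + 1)) else 0)"

lemma rep_eval1: "(\<Sum>x\<in>I1 n d. c1 x * pvec (fst x) (snd x) j k) = (if (j, k) \<in> I1 n d then c1 (j, k) else 0)"
proof -
  have "(\<Sum>x\<in>I1 n d. c1 x * pvec (fst x) (snd x) j k) = (\<Sum>x\<in>I1 n d. if x = (j, k) then c1 x else 0)"
    by (intro sum.cong refl) (auto simp: pvec_def)
  also have "\<dots> = (if (j, k) \<in> I1 n d then c1 (j, k) else 0)"
    using I1_fin by (simp add: sum.delta)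
  finally show ?thesis .
qed

lemma vvec_eval: "vvec i m j k =
   (if (i, m) = (j, k(j := k j - 1)) then (if 1 \<le> k j then real (1 + k (j + 1)) else 0) else 0)
 - (if (i, m) = (j - 1, k(j := k j - 1)) then (if 1 \<le> j \<and> 1 \<le> k j then real (1 + k (j - 1)) else 0) else 0)"
proof -
  have A: "(j = i \<and> k = m(i := m i + 1)) \<longleftrightarrow> ((i, m) = (j, k(j := k j - 1)) \<and> 1 \<le> k j)"
    using upd_eq[of k m i] by auto
  have B: "(j = i + 1 \<and> k = m(i + 1 := m (i + 1) + 1)) \<longleftrightarrow> ((i, m) = (j - 1, k(j := k j - 1)) \<and> 1 \<le> j \<and> 1 \<le> k j)"
    using upd_eq[of k m "i+1"] by auto
  show ?thesis unfolding vvec_def A B by auto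
qed

lemma rep_eval2: "(\<Sum>x\<in>I2 n d. c2 x * vvec (fst x) (snd x) j k) =
   (if 1 \<le> k j \<and> (j, k(j := k j - 1)) \<in> I2 n d then c2 (j, k(j := k j - 1)) * real (1 + k (j + 1)) else 0)
 - (if 1 \<le> j \<and> 1 \<le> k j \<and> (j - 1, k(j := k j - 1)) \<in> I2 n d then c2 (j - 1, k(j := k j - 1)) * real (1 + k (j - 1)) else 0)" (is "_ = ?R")
proof -
  let ?k = "k(j := k j - 1)"
  have "(\<Sum>x\<in>I2 n d. c2 x * vvec (fst x) (snd x) j k) =
     (\<Sum>x\<in>I2 n d. (if x = (j, ?k) then (if 1 \<le> k j then c2 x * real (1 + k (j + 1)) else 0) else 0)
    - (if x = (j - 1, ?k) then (if 1 \<le> j \<and> 1 \<le> k j then c2 x * real (1 + k (j - 1)) else 0) else 0))"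
  proof (intro sum.cong refl)
    fix x :: "nat \<times> mindex"
    obtain i m where x: "x = (i, m)" by (cases x)
    show "c2 x * vvec (fst x) (snd x) j k =
     (if x = (j, ?k) then (if 1 \<le> k j then c2 x * real (1 + k (j + 1)) else 0) else 0)
    - (if x = (j - 1, ?k) then (if 1 \<le> j \<and> 1 \<le> k j then c2 x * real (1 + k (j - 1)) else 0) else 0)"
      unfolding x fst_conv snd_conv vvec_eval by (simp add: right_diff_distrib)
  qed
  also have "\<dots> = ?R" using I2_fin by (simp add: sum_subtractf sum.delta)
  finally show ?thesis .
qed

definition E2 :: "nat \<Rightarrow> nat \<Rightarrow> ((nat \<times> mindex) \<Rightarrow> real) \<Rightarrow> nat \<Rightarrow> mindex \<Rightarrow> real" where
  "E2 n d c2 j k =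
   (if 1 \<le> k j \<and> (j, k(j := k j - 1)) \<in> I2 n d then c2 (j, k(j := k j - 1)) * real (1 + k (j + 1)) else 0)
 - (if 1 \<le> j \<and> 1 \<le> k j \<and> (j - 1, k(j := k j - 1)) \<in> I2 n d then c2 (j - 1, k(j := k j - 1)) * real (1 + k (j - 1)) else 0)"

lemma rep_iff: "represents n d F c1 c2 \<longleftrightarrow>
  (\<forall>x. x \<notin> I1 n d \<longrightarrow> c1 x = 0) \<and> (\<forall>x. x \<notin> I2 n d \<longrightarrow> c2 x = 0) \<and>
  (\<forall>j k. F j k = (if (j, k) \<in> I1 n d then c1 (j, k) else 0) + E2 n d c2 j k)"
  unfolding represents_def rep_eval1 rep_eval2 E2_def by (rule refl)

lemma E2_zero: "k j = 0 \<Longrightarrow> E2 n d c2 j k = 0"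
  by (simp add: E2_def)

lemma divcancel: "(b::real) \<noteq> 0 \<Longrightarrow> x / (a * b) * b = x / a"
  by simp

lemma existence:
  assumes F: "F \<in> Vd n d" and d: "d \<ge> 1"
  shows "represents n d F (C1 n d F) (C2 n d F)"
  unfolding rep_iff
proof (intro conjI allI impI)
  show "\<And>x. x \<notin> I1 n d \<Longrightarrow> C1 n d F x = 0" by (simp add: C1_def)
  show "\<And>x. x \<notin> I2 n d \<Longrightarrow> C2 n d F x = 0" by (simp add: C2_def)
  fix j k
  have Fz: "F j k = 0" if "\<not> (j < n \<and> k \<in> mi n d)"
    using F that by (auto simp: Vd_def Fd_def)
  have dS: "d = Suc (d - 1)" using d by simp
  show "F j k = (if (j, k) \<in> I1 n d then C1 n d F (j, k) else 0) + E2 n d (C2 n d F) j k"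
  proof (cases "k j = 0")
    case True
    then show ?thesis using Fz by (auto simp: E2_zero C1_def I1_def)
  next
    case False
    then have kj: "1 \<le> k j" by simp
    then have nI1: "(j, k) \<notin> I1 n d" by (simp add: I1_def)
    define m where "m = k(j := k j - 1)"
    have km: "k = m(j := m j + 1)" using upd_eq[of k m j] kj m_def by simp
    show ?thesis
    proof (cases "j < n \<and> m \<in> mi n (d - 1)")
      case False
      have "\<not> (j < n \<and> k \<in> mi n d)"
        using False mi_dec[of k n "d - 1" j] dS kj m_def by auto
      then have "F j k = 0" by (rule Fz)
      moreover have "E2 n d (C2 n d F) j k = 0"
        using False unfolding E2_def m_def[symmetric] by (auto simp: I2_def)
      ultimately show ?thesis using nI1 by simp
    next
      case True
      have mj: "k j = m j + 1" "k (j + 1) = m (j + 1)" "1 \<le> j \<Longrightarrow> k (j - 1) = m (j - 1)"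
        using km by auto
      have pos: "real (m j + 1) > 0" by simp
      have nz: "(1::real) + real a \<noteq> 0" for a
        by (metis add_nonneg_eq_0_iff of_nat_0_le_iff zero_neq_one zero_le_one)
      have t1: "(if (j, m) \<in> I2 n d then C2 n d F (j, m) * real (1 + k (j + 1)) else 0)
          = TT F m (j + 1) / real (m j + 1)"
      proof (cases "j + 1 < n")
        case True
        then have "(j, m) \<in> I2 n d" using \<open>j < n \<and> m \<in> mi n (d - 1)\<close> by (simp add: I2_def)
        then have c: "C2 n d F (j, m) = TT F m (j + 1) / (real (m j + 1) * real (m (j + 1) + 1))"
          by (simp add: C2_def)
        have e: "real (1 + k (j + 1)) = real (m (j + 1) + 1)" using mj by simp
        have b: "real (m (j + 1) + 1) \<noteq> 0" by simp
        show ?thesis using \<open>(j, m) \<in> I2 n d\<close> by (simp only: if_True c e divcancel[OF b])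
      next
        case False
        then have "j + 1 = n" using True by simp
        then show ?thesis using TT_n[OF F] by (simp add: I2_def)
      qed
      have t2: "(if 1 \<le> j \<and> (j - 1, m) \<in> I2 n d then C2 n d F (j - 1, m) * real (1 + k (j - 1)) else 0)
          = TT F m j / real (m j + 1)"
      proof (cases "1 \<le> j")
        case True
        then have "(j - 1, m) \<in> I2 n d" using \<open>j < n \<and> m \<in> mi n (d - 1)\<close> by (simp add: I2_def)
        then have c: "C2 n d F (j - 1, m) = TT F m (j - 1 + 1) / (real (m (j - 1) + 1) * real (m (j - 1 + 1) + 1))"
          by (simp add: C2_def)
        have e: "real (1 + k (j - 1)) = real (m (j - 1) + 1)" using mj True by simp
        have e2: "j - 1 + 1 = j" using True by simp
        have b: "real (m (j - 1) + 1) \<noteq> 0" by simp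
        have "(1 \<le> j \<and> (j - 1, m) \<in> I2 n d) = True" using True \<open>(j - 1, m) \<in> I2 n d\<close> by simp
        then show ?thesis by (simp only: if_True c e e2 mult.commute[of "real (m (j - 1) + 1)"] divcancel[OF b])
      next
        case False
        then have "j = 0" by simp
        then show ?thesis by (simp add: TT_0)
      qed
      have "E2 n d (C2 n d F) j k = TT F m (j + 1) / real (m j + 1) - TT F m j / real (m j + 1)"
        unfolding E2_def m_def[symmetric] t1[symmetric] t2[symmetric] using kj by simp
      also have "\<dots> = (TT F m (Suc j) - TT F m j) / real (m j + 1)"
        by (simp add: diff_divide_distrib)
      also have "TT F m (Suc j) - TT F m j = real (m j + 1) * F j k"
        by (simp only: TT_Suc km[symmetric])
      also have "real (m j + 1) * F j k / real (m j + 1) = F j k"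
        using pos by simp
      finally show ?thesis using nI1 by simp
    qed
  qed
qed

lemma uniq:
  assumes r: "represents n d F c1 c2"
  shows "c1 = C1 n d F \<and> c2 = C2 n d F"
proof -
  have s1: "\<And>x. x \<notin> I1 n d \<Longrightarrow> c1 x = 0"
   and s2: "\<And>x. x \<notin> I2 n d \<Longrightarrow> c2 x = 0"
   and eq: "\<And>j k. F j k = (if (j, k) \<in> I1 n d then c1 (j, k) else 0) + E2 n d c2 j k"
    using r unfolding rep_iff by auto
  have "c1 x = C1 n d F x" for x
  proof (cases "x \<in> I1 n d")
    case True
    obtain j k where x: "x = (j, k)" by (cases x)
    have "k j = 0" using True x by (simp add: I1_def)
    then show ?thesis using eq[of j k] True x by (simp add: E2_zero C1_def)
  next
    case False
    then show ?thesis using s1 by (simp add: C1_def)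
  qed
  moreover
  have step: "c2 (i, m) * real (m (i + 1) + 1) * real (m i + 1) =
     real (m i + 1) * F i (m(i := m i + 1))
     + (if 1 \<le> i then c2 (i - 1, m) * real (m (i - 1) + 1) * real (m i + 1) else 0)"
    if I: "(i, m) \<in> I2 n d" for i m
  proof -
    define k where "k = m(i := m i + 1)"
    have kk: "k(i := k i - 1) = m" "k i = m i + 1" "k (i + 1) = m (i + 1)" "1 \<le> i \<Longrightarrow> k (i - 1) = m (i - 1)"
      by (auto simp: k_def)
    have nI: "(i, k) \<notin> I1 n d" by (simp add: I1_def k_def)
    have I': "1 \<le> i \<Longrightarrow> (i - 1, m) \<in> I2 n d" using I by (simp add: I2_def)
    have "F i k = c2 (i, m) * real (1 + m (i + 1))
       - (if 1 \<le> i then c2 (i - 1, m) * real (1 + m (i - 1)) else 0)"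
      using eq[of i k, unfolded E2_def kk(1)] nI I I' kk(2-4) by (cases "1 \<le> i") auto
    then have h: "c2 (i, m) * real (m (i + 1) + 1) = F i k
       + (if 1 \<le> i then c2 (i - 1, m) * real (m (i - 1) + 1) else 0)"
      by (simp add: add.commute)
    show ?thesis unfolding k_def[symmetric] h
      by (cases "1 \<le> i") (simp_all add: algebra_simps)
  qed
  have key: "\<forall>m. (i, m) \<in> I2 n d \<longrightarrow>
      c2 (i, m) * real (m (i + 1) + 1) * real (m i + 1) = TT F m (i + 1)" for i
  proof (induction i)
    case 0
    show ?case using step[of 0] by (simp add: TT_Suc TT_0 algebra_simps)
  next
    case (Suc i)
    show ?case
    proof (intro allI impI)
      fix m assume I: "(Suc i, m) \<in> I2 n d"
      then have "(i, m) \<in> I2 n d" by (simp add: I2_def)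
      then have ih: "c2 (i, m) * real (m (i + 1) + 1) * real (m i + 1) = TT F m (i + 1)"
        using Suc by blast
      show "c2 (Suc i, m) * real (m (Suc i + 1) + 1) * real (m (Suc i) + 1) = TT F m (Suc i + 1)"
        using step[OF I] ih by (simp add: TT_Suc algebra_simps)
    qed
  qed
  have "c2 x = C2 n d F x" for x
  proof (cases "x \<in> I2 n d")
    case True
    obtain i m where x: "x = (i, m)" by (cases x)
    have "c2 (i, m) * real (m (i + 1) + 1) * real (m i + 1) = TT F m (i + 1)"
      using key True x by blast
    moreover have "real (m (i + 1) + 1) * real (m i + 1) \<noteq> 0" by simp
    ultimately have "c2 (i, m) = TT F m (i + 1) / (real (m i + 1) * real (m (i + 1) + 1))"
      by (simp add: eq_divide_eq mult.commute mult.left_commute)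
    then show ?thesis using True x by (simp add: C2_def)
  next
    case False
    then show ?thesis using s2 by (simp add: C2_def)
  qed
  ultimately show ?thesis by auto
qed

theorem lemma1:
  fixes n d :: nat
  assumes "n \<ge> 1" and "d \<ge> 1"
  shows "finite (I1 n d) \<and> finite (I2 n d)
    \<and> card (I1 n d) = n * dimP (n - 1) d
    \<and> card (I2 n d) = (n - 1) * dimP n (d - 1)
    \<and> (\<forall>(i, m) \<in> I1 n d. pvec i m \<in> Vd n d)
    \<and> (\<forall>(i, m) \<in> I2 n d. vvec i m \<in> Vd n d)
    \<and> (\<forall>F \<in> Vd n d. \<exists>!c. represents n d F (fst c) (snd c))"
proof (intro conjI)
  show "finite (I1 n d)" by (rule I1_fin)
  show "finite (I2 n d)" by (rule I2_fin)
  show "card (I1 n d) = n * dimP (n - 1) d" by (rule I1_card[OF assms(1)])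
  show "card (I2 n d) = (n - 1) * dimP n (d - 1)" by (rule I2_card[OF assms(1)])
  show "\<forall>(i, m) \<in> I1 n d. pvec i m \<in> Vd n d" using pvec_V by blast
  show "\<forall>(i, m) \<in> I2 n d. vvec i m \<in> Vd n d" using vvec_V assms(2) by blast
  show "\<forall>F \<in> Vd n d. \<exists>!c. represents n d F (fst c) (snd c)"
  proof
    fix F assume F: "F \<in> Vd n d"
    show "\<exists>!c. represents n d F (fst c) (snd c)"
    proof (rule ex1I[where a="(C1 n d F, C2 n d F)"])
      show "represents n d F (fst (C1 n d F, C2 n d F)) (snd (C1 n d F, C2 n d F))"
        using existence[OF F assms(2)] by simp
      fix c assume "represents n d F (fst c) (snd c)"
      from uniq[OF this] show "c = (C1 n d F, C2 n d F)" by (simp add: prod_eq_iff)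
    qed
  qed
qed

end
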